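(* Consider the car-following system with state $x=(D,v,v_{\rm L})\in\mathbb{R}^3$: $$\dot D = v_{\rm L}-v,\qquad \dot v = u - p(v),\qquad \dot v_{\rm L} = a_{\rm L}.$$ Here $p$ is locally Lipschitz with $p(v)\ge 0$, and $a_{\rm L}$ is the leader's acceleration, treated as a given exogenous input. The system is driven by the connected cruise controller $$u = k_{\rm d}(x) = A\big(V(D)-v\big) + B\big(W(v_{\rm L})-v\big) + C a_{\rm L}$$ with $A,B\ge 0$ and $C=0$, where $$V(D)=\min\{\kappa(D-D_{\rm st}),v_{\rm max}\}, \qquad W(v_{\rm L})=\min\{v_{\rm L},v_{\rm max}\}.$$ The constants satisfy $\kappa>0$, $v_{\rm max}>0$ and $D_{\rm st}\in\mathbb{R}$. Let $D_{\rm sf}\in\mathbb{R}$ and $T_{\rm h}>0$, and set $\bar\kappa = 1/T_{\rm h}$. Define $$h_{\rm TH}(x) = \bar\kappa(D-D_{\rm sf}) - v, \qquad \mathcal{S}_{\rm TH}=\{x: h_{\rm TH}(x)\ge0\} = \{x: D\ge D_{\rm sf}+T_{\rm h}v\}.$$ Then the closed loop is safe with respect to $\mathcal{S}_{\rm TH}$, in the sense that every solution with $x(0)\in\mathcal{S}_{\rm TH}$ satisfies $x(t)\in\mathcal{S}_{\rm TH}$ for all $t\ge0$, in either of the following two cases: (i) $v(t)\ge 0$ along the solution, $D_{\rm st}\ge D_{\rm sf}$, and $B=\bar\kappa\ge\kappa$; or (ii) there is $\bar v\ge 0$ such that $v(t),v_{\rm L}(t)\in[0,\bar v]$ along the solution,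 $D_{\rm st}>D_{\rm sf}$, $\bar\kappa\ge\kappa$, and $$A \ \ge\ \frac{|\bar\kappa - B|\,\bar v}{\kappa\,(D_{\rm st}-D_{\rm sf})}.$$
   Context: Standing assumption: solutions of the closed loop system exist and are unique for all $t\ge 0$. *)

theory Defs
  imports "HOL-Analysis.Analysis"
begin

definition V_pol :: "real \<Rightarrow> real \<Rightarrow> real \<Rightarrow> real \<Rightarrow> real" where
  "V_pol \<kappa> Dst vmax D = min (\<kappa> * (D - Dst)) vmax"

definition W_sat :: "real \<Rightarrow> real \<Rightarrow> real" where
  "W_sat vmax vL = min vL vmax"

definition kd :: "real \<Rightarrow> real \<Rightarrow> real \<Rightarrow> real \<Rightarrow> real \<Rightarrow> real \<Rightarrow> real \<Rightarrow> real
                  \<Rightarrow> real \<Rightarrow> real \<Rightarrow> real" where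
  "kd A B C \<kappa> Dst vmax D v vL aL =
     A * (V_pol \<kappa> Dst vmax D - v) + B * (W_sat vmax vL - v) + C * aL"

definition h_TH :: "real \<Rightarrow> real \<Rightarrow> real \<Rightarrow> real \<Rightarrow> real" where
  "h_TH Th Dsf D v = (1 / Th) * (D - Dsf) - v"

end

theory Submission
  imports Defs
begin

lemma stay_nonneg:
  fixes h h' :: "real \<Rightarrow> real"
  assumes der: "\<And>t. t \<ge> 0 \<Longrightarrow> (h has_real_derivative h' t) (at t within {0..})"
    and h0: "h 0 \<ge> 0"
    and pos: "\<And>t. t \<ge> 0 \<Longrightarrow> h t < 0 \<Longrightarrow> h' t \<ge> 0"
  shows "\<forall>t\<ge>0. h t \<ge> 0"
proof (rule ccontr)
  assume "\<not> (\<forall>t\<ge>0. h t \<ge> 0)"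
  then obtain t1 where t1: "t1 \<ge> 0" "h t1 < 0" by (meson not_le)
  have cont: "continuous_on {0..} h"
    using der by (intro DERIV_continuous_on) auto
  let ?S = "{s \<in> {0..t1}. h s \<ge> 0}"
  have cS: "closed ?S"
  proof -
    have "continuous_on {0..t1} h" using cont by (rule continuous_on_subset) auto
    then show ?thesis
      using continuous_closed_preimage[of "{0..t1}" h "{0..}"]
      by (auto simp: vimage_def Int_def)
  qed
  have bS: "bounded ?S" by (rule bounded_subset[of "{0..t1}"]) auto
  have ne: "?S \<noteq> {}" using h0 t1 by auto
  define t0 where "t0 = Sup ?S"
  have t0S: "t0 \<in> ?S" unfolding t0_def by (rule closed_contains_Sup[OF ne bounded_imp_bdd_above[OF bS] cS])
  have t0le: "\<And>s. s \<in> ?S \<Longrightarrow> s \<le> t0" unfolding t0_def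
    by (rule cSup_upper[OF _ bounded_imp_bdd_above[OF bS]])
  have t0t1: "t0 < t1" using t0S t1 by (metis (mono_tags, lifting) atLeastAtMost_iff less_eq_real_def mem_Collect_eq not_le)
  have neg: "\<And>s. t0 < s \<Longrightarrow> s \<le> t1 \<Longrightarrow> h s < 0"
  proof (rule ccontr)
    fix s assume "t0 < s" "s \<le> t1" "\<not> h s < 0"
    then have "s \<in> ?S" using t0S by auto
    then show False using t0le[OF \<open>s \<in> ?S\<close>] \<open>t0 < s\<close> by linarith
  qed
  have "h t0 \<le> h t1"
  proof (rule DERIV_nonneg_imp_increasing_open[of t0 t1 h])
    show "t0 \<le> t1" using t0t1 by simp
    show "continuous_on {t0..t1} h" using t0S by (intro continuous_on_subset[OF cont]) auto
    fix x assume x: "t0 < x" "x < t1"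
    then have x0: "x > 0" using t0S by auto
    have "(h has_real_derivative h' x) (at x within {0<..})"
      using x0 by (intro has_field_derivative_subset[OF der[of x]]) auto
    moreover have "at x within {0<..} = at x"
      using x0 by (intro at_within_open) auto
    ultimately have "(h has_real_derivative h' x) (at x)" by metis
    moreover have "h x < 0" using neg[of x] x by linarith
    then have "h' x \<ge> 0" using pos[of x] x0 by linarith
    ultimately show "\<exists>y. (h has_real_derivative y) (at x) \<and> 0 \<le> y" by blast
  qed
  then show False using t0S t1 by auto
qed

theorem theorem3:
  fixes p :: "real \<Rightarrow> real"
    and aL D v vL :: "real \<Rightarrow> real"
    and A B C \<kappa> vmax Dst Dsf Th :: real
  assumes p_lip: "local_lipschitz (UNIV :: real set) UNIV (\<lambda>_::real. p)"
    and p_nonneg: "\<And>w. p w \<ge> 0"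
    and AB: "A \<ge> 0" "B \<ge> 0" and C0: "C = 0"
    and \<kappa>_pos: "\<kappa> > 0" and vmax_pos: "vmax > 0"
    and Th_pos: "Th > 0"
    and D_ode: "\<And>t. t \<ge> 0 \<Longrightarrow> (D has_real_derivative (vL t - v t)) (at t within {0..})"
    and v_ode: "\<And>t. t \<ge> 0 \<Longrightarrow>
        (v has_real_derivative (kd A B C \<kappa> Dst vmax (D t) (v t) (vL t) (aL t) - p (v t))) (at t within {0..})"
    and vL_ode: "\<And>t. t \<ge> 0 \<Longrightarrow> (vL has_real_derivative (aL t)) (at t within {0..})"
    and init: "h_TH Th Dsf (D 0) (v 0) \<ge> 0"
    and cases:
      "((\<forall>t\<ge>0. v t \<ge> 0) \<and> Dst \<ge> Dsf \<and> B = 1 / Th \<and> 1 / Th \<ge> \<kappa>)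
       \<or> (\<exists>vbar\<ge>0. (\<forall>t\<ge>0. 0 \<le> v t \<and> v t \<le> vbar \<and> 0 \<le> vL t \<and> vL t \<le> vbar)
            \<and> Dst > Dsf \<and> 1 / Th \<ge> \<kappa>
            \<and> A \<ge> \<bar>1 / Th - B\<bar> * vbar / (\<kappa> * (Dst - Dsf)))"
  shows "\<forall>t\<ge>0. h_TH Th Dsf (D t) (v t) \<ge> 0"
proof -
  define k where "k = 1 / Th"
  have k0: "k > 0" using Th_pos by (simp add: k_def)
  define h where "h t = h_TH Th Dsf (D t) (v t)" for t
  define h' where "h' t = k * (vL t - v t) - (kd A B C \<kappa> Dst vmax (D t) (v t) (vL t) (aL t) - p (v t))" for t
  have hform: "h t = k * (D t - Dsf) - v t" for t by (simp add: h_def h_TH_def k_def)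
  have der: "(h has_real_derivative h' t) (at t within {0..})" if "t \<ge> 0" for t
  proof -
    have "((\<lambda>t. k * (D t - Dsf) - v t) has_real_derivative h' t) (at t within {0..})"
      unfolding h'_def using D_ode[OF that] v_ode[OF that]
      by (auto intro!: derivative_eq_intros)
    then show ?thesis by (simp add: hform[abs_def])
  qed
  have pos: "h' t \<ge> 0" if t0: "t \<ge> 0" and hn: "h t < 0" for t
  proof -
    let ?V = "V_pol \<kappa> Dst vmax (D t)" and ?W = "W_sat vmax (vL t)"
    have Vle: "?V \<le> \<kappa> * (D t - Dst)" by (simp add: V_pol_def)
    have WvL: "?W \<le> vL t" by (simp add: W_sat_def)
    have h'ge: "h' t \<ge> k * (vL t - v t) - (A * (?V - v t) + B * (?W - v t))"
      using p_nonneg[of "v t"] by (simp add: h'_def kd_def C0)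
    from cases show ?thesis
    proof
      assume c: "(\<forall>t\<ge>0. v t \<ge> 0) \<and> Dst \<ge> Dsf \<and> B = 1 / Th \<and> 1 / Th \<ge> \<kappa>"
      have vt: "v t \<ge> 0" using c t0 by auto
      have Bk: "B = k" "k \<ge> \<kappa>" using c by (auto simp: k_def)
      have "?V - v t \<le> 0"
      proof (cases "D t \<ge> Dst")
        case True
        have "\<kappa> * (D t - Dst) \<le> k * (D t - Dst)" using Bk True by (intro mult_right_mono) auto
        also have "\<dots> \<le> k * (D t - Dsf)" using c k0 by (intro mult_left_mono) auto
        finally show ?thesis using Vle hn hform[of t] by linarith
      next
        case False
        then have "\<kappa> * (D t - Dst) \<le> 0" using \<kappa>_pos by (intro mult_nonneg_nonpos) auto
        then show ?thesis using Vle vt by linarith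
      qed
      then have "A * (?V - v t) \<le> 0" using AB by (simp add: mult_nonneg_nonpos)
      moreover have "k * (vL t - v t) - B * (?W - v t) \<ge> 0"
      proof -
        have "k * (vL t - v t) - B * (?W - v t) = k * (vL t - ?W)" using Bk by (simp add: algebra_simps)
        moreover have "k * (vL t - ?W) \<ge> 0" using k0 WvL by simp
        ultimately show ?thesis by simp
      qed
      ultimately show ?thesis using h'ge by linarith
    next
      assume "\<exists>vbar\<ge>0. (\<forall>t\<ge>0. 0 \<le> v t \<and> v t \<le> vbar \<and> 0 \<le> vL t \<and> vL t \<le> vbar)
            \<and> Dst > Dsf \<and> 1 / Th \<ge> \<kappa>
            \<and> A \<ge> \<bar>1 / Th - B\<bar> * vbar / (\<kappa> * (Dst - Dsf))"
      then obtain vbar where vb: "vbar \<ge> 0" "0 \<le> v t" "v t \<le> vbar" "0 \<le> vL t" "vL t \<le> vbar"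
        "Dst > Dsf" "k \<ge> \<kappa>" "A \<ge> \<bar>k - B\<bar> * vbar / (\<kappa> * (Dst - Dsf))"
        using t0 by (auto simp: k_def)
      have W0: "0 \<le> ?W" "?W \<le> vbar" using vb vmax_pos WvL by (auto simp: W_sat_def)
      have e1: "k * (vL t - v t) - B * (?W - v t) \<ge> (k - B) * (?W - v t)"
        using WvL k0 by (simp add: algebra_simps)
      have "\<bar>(k - B) * (?W - v t)\<bar> \<le> \<bar>k - B\<bar> * vbar"
        unfolding abs_mult using W0 vb by (intro mult_left_mono) auto
      then have e2: "(k - B) * (?W - v t) \<ge> - (\<bar>k - B\<bar> * vbar)" by linarith
      have pk: "\<kappa> * (Dst - Dsf) > 0" using \<kappa>_pos vb by simp
      have "v t \<ge> \<kappa> * (D t - Dsf)"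
      proof (cases "D t \<ge> Dsf")
        case True
        have "\<kappa> * (D t - Dsf) \<le> k * (D t - Dsf)" using vb True by (intro mult_right_mono) auto
        then show ?thesis using hn hform[of t] by linarith
      next
        case False
        then have "\<kappa> * (D t - Dsf) \<le> 0" using \<kappa>_pos by (intro mult_nonneg_nonpos) auto
        then show ?thesis using vb by linarith
      qed
      then have vV: "v t - ?V \<ge> \<kappa> * (Dst - Dsf)" using Vle by (simp add: algebra_simps)
      have "A * (\<kappa> * (Dst - Dsf)) \<ge> \<bar>k - B\<bar> * vbar"
        using vb(8) pk by (simp add: divide_le_eq)
      also have "A * (\<kappa> * (Dst - Dsf)) \<le> A * (v t - ?V)" using vV AB by (intro mult_left_mono) auto
      finally have "A * (?V - v t) \<le> - (\<bar>k - B\<bar> * vbar)" by (simp add: algebra_simps)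
      then show ?thesis using h'ge e1 e2 by linarith
    qed
  qed
  have "\<forall>t\<ge>0. h t \<ge> 0"
    by (rule stay_nonneg[OF der]) (use init pos in \<open>auto simp: h_def\<close>)
  then show ?thesis by (simp add: h_def)
qed

end
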